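(* Let $a,\lambda\in\mathbb{R}^n$ and $\beta\in\mathbb{R}^m$ with $\|a\|=\|\lambda\|=\|\beta\|=1$, $\lambda\neq\pm a$, and $d\in\mathbb{R}^m$ with $\|d\|<1$, such that $\lambda^\mathsf{T} a+d^\mathsf{T}\beta\ge0$. Let $$x_\beta=\sqrt{\tfrac{1-(d^\mathsf{T}\beta)^2}{1-(\lambda^\mathsf{T} a)^2}}\,\lambda-\Big(d^\mathsf{T}\beta+\lambda^\mathsf{T} a\sqrt{\tfrac{1-(d^\mathsf{T}\beta)^2}{1-(\lambda^\mathsf{T} a)^2}}\Big)a$$ (the optimal solution of $\max_x\{\lambda^\mathsf{T} x:\|x\|\le1,\ a^\mathsf{T} x+d^\mathsf{T}\beta\le0\}$), and $\phi_\lambda(\beta)=\max_x\{\lambda^\mathsf{T} x:\|x\|\le1,\ a^\mathsf{T} x+d^\mathsf{T}\beta\le0\}$. Then every sequence $(x_k)_k$ in the span $\langle\lambda,a\rangle$ converging to $x_\beta$ with $\|x_k\|=1$ and $a^\mathsf{T} x_k+d^\mathsf{T}\beta<0$ for all $k$ satisfies $$\lim_{k\to\infty}\frac{\lambda^\mathsf{T}(x_k-x_\beta)}{a^\mathsf{T}(x_k-x_\beta)}=\frac{d^\mathsf{T}\beta+\lambda^\mathsf{T} a\,\phi_\lambda(\beta)}{\phi_\lambda(\beta)+d^\mathsf{T}\beta\,\lambda^\mathsf{T} a}.$$ Moreover, such sequences always exist.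
   Context: $\|\cdot\|$ is the Euclidean norm; $\langle\lambda,a\rangle$ denotes the linear span of $\lambda$ and $a$. *)

theory Defs
  imports "HOL-Analysis.Analysis"
begin

text \<open>phi_lambda(beta) = max { lam . x : norm x <= 1, a . x + d . beta <= 0 }.
  The maximum is written as a supremum (it is attained whenever the feasible set is nonempty).\<close>
definition phi_val :: "'a::euclidean_space \<Rightarrow> 'a \<Rightarrow> 'b::euclidean_space \<Rightarrow> 'b \<Rightarrow> real" where
  "phi_val lam a d beta = (SUP x \<in> {x. norm x \<le> 1 \<and> a \<bullet> x + d \<bullet> beta \<le> 0}. lam \<bullet> x)"

end

theory Submission
  imports Defs
begin

theorem lemma2:
  fixes a lam :: "'a::euclidean_space" and beta d :: "'b::euclidean_space"
  assumes "norm a = 1" and "norm lam = 1" and "norm beta = 1"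
    and "lam \<noteq> a" and "lam \<noteq> - a"
    and "norm d < 1"
    and "lam \<bullet> a + d \<bullet> beta \<ge> 0"
  defines "s \<equiv> sqrt ((1 - (d \<bullet> beta)\<^sup>2) / (1 - (lam \<bullet> a)\<^sup>2))"
  defines "xb \<equiv> s *\<^sub>R lam - (d \<bullet> beta + (lam \<bullet> a) * s) *\<^sub>R a"
  shows "(\<forall>X :: nat \<Rightarrow> 'a.
            (\<forall>k. X k \<in> span {lam, a} \<and> norm (X k) = 1 \<and> a \<bullet> X k + d \<bullet> beta < 0)
            \<and> X \<longlonglongrightarrow> xb
          \<longrightarrow> (\<lambda>k. (lam \<bullet> (X k - xb)) / (a \<bullet> (X k - xb)))
                \<longlonglongrightarrow> (d \<bullet> beta + (lam \<bullet> a) * phi_val lam a d beta)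
                     / (phi_val lam a d beta + (d \<bullet> beta) * (lam \<bullet> a)))
       \<and> (\<exists>X :: nat \<Rightarrow> 'a.
            (\<forall>k. X k \<in> span {lam, a} \<and> norm (X k) = 1 \<and> a \<bullet> X k + d \<bullet> beta < 0)
            \<and> X \<longlonglongrightarrow> xb)"
proof -
  define c where "c = lam \<bullet> a"
  define t where "t = d \<bullet> beta"
  define m where "m = sqrt (1 - c\<^sup>2)"
  define r where "r = sqrt (1 - t\<^sup>2)"
  define e where "e = (1/m) *\<^sub>R (lam - c *\<^sub>R a)"
  have aa: "a \<bullet> a = 1" using assms(1) by (simp add: dot_square_norm)
  have ll: "lam \<bullet> lam = 1" using assms(2) by (simp add: dot_square_norm)
  have c1: "\<bar>c\<bar> < 1"
  proof -
    have "\<bar>c\<bar> \<le> 1" using Cauchy_Schwarz_ineq2[of lam a] assms(1,2) by (simp add: c_def)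
    moreover have "\<bar>c\<bar> \<noteq> 1"
      using norm_cauchy_schwarz_abs_eq[of lam a] assms(1,2,4,5) by (auto simp: c_def)
    ultimately show ?thesis by simp
  qed
  have t1: "\<bar>t\<bar> < 1"
  proof -
    have "\<bar>t\<bar> \<le> norm d * norm beta" using Cauchy_Schwarz_ineq2[of d beta] by (simp add: t_def)
    then show ?thesis using assms(3,6) by simp
  qed
  have c2: "c\<^sup>2 < 1" using c1 by (simp add: abs_square_less_1)
  have t2: "t\<^sup>2 < 1" using t1 by (simp add: abs_square_less_1)
  have mpos: "m > 0" using c2 by (simp add: m_def)
  have rpos: "r > 0" using t2 by (simp add: r_def)
  have msq: "m\<^sup>2 = 1 - c\<^sup>2" using c2 by (simp add: m_def)
  have rsq: "r\<^sup>2 = 1 - t\<^sup>2" using t2 by (simp add: r_def)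
  have sm: "s * m = r"
    unfolding s_def m_def r_def c_def[symmetric] t_def[symmetric]
    using c2 t2 by (simp add: real_sqrt_mult[symmetric])
  have spos: "s > 0" using sm mpos rpos by (metis zero_less_mult_pos2)
  have ea: "e \<bullet> a = 0" using aa unfolding e_def c_def by (simp add: inner_diff_left)
  have el: "e \<bullet> lam = m"
  proof -
    have "e \<bullet> lam = (1 - c\<^sup>2) / m" using ll unfolding e_def c_def
      by (simp add: inner_diff_left inner_diff_right inner_commute power2_eq_square)
    moreover have "(1 - c\<^sup>2) / m = m" using msq mpos by (simp add: power2_eq_square field_simps)
    ultimately show ?thesis by simp
  qed
  have ee: "e \<bullet> e = 1"
  proof -
    have "e \<bullet> e = (1/m) * (e \<bullet> lam - c * (e \<bullet> a))" 
      by (subst (2) e_def) (simp add: inner_diff_right)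
    then show ?thesis using el ea mpos by simp
  qed
  have lam_eq: "lam = c *\<^sub>R a + m *\<^sub>R e" using mpos unfolding e_def by simp
  have xb_eq: "xb = (- t) *\<^sub>R a + r *\<^sub>R e"
    unfolding xb_def c_def[symmetric] t_def[symmetric] sm[symmetric]
    by (subst lam_eq) (simp add: algebra_simps)
  have ss: "s\<^sup>2 * (1 - c\<^sup>2) = 1 - t\<^sup>2"
  proof -
    have "(s * m)\<^sup>2 = r\<^sup>2" using sm by simp
    then show ?thesis using msq rsq by (simp add: power_mult_distrib)
  qed
  have ctr: "t + c * s \<ge> 0"
  proof (cases "t < 0")
    case True
    then have ct: "c \<ge> -t" using assms(7) by (simp add: c_def t_def)
    have "(-t)\<^sup>2 \<le> c\<^sup>2" using power_mono[OF ct, of 2] True by simp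
    then have tc: "t\<^sup>2 \<le> c\<^sup>2" by simp
    have s1: "s\<^sup>2 \<ge> 1"
    proof (rule ccontr)
      assume "\<not> s\<^sup>2 \<ge> 1"
      then have "s\<^sup>2 * (1 - c\<^sup>2) < 1 * (1 - c\<^sup>2)" using c2 by (intro mult_strict_right_mono) auto
      then show False using ss tc by simp
    qed
    have "c\<^sup>2 * 1 \<le> c\<^sup>2 * s\<^sup>2" using s1 by (intro mult_left_mono) auto
    then have "(-t)\<^sup>2 \<le> (c * s)\<^sup>2" using tc by (simp add: power_mult_distrib)
    moreover have "c * s \<ge> 0" using True ct spos by simp
    ultimately have "-t \<le> c * s" by (rule power2_le_imp_le)
    then show ?thesis by simp
  next
    case False
    show ?thesis
    proof (cases "c \<ge> 0")
      case True
      then show ?thesis using False spos by simp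
    next
      case c0: False
      then have ct: "-c \<le> t" using assms(7) by (simp add: c_def t_def)
      have "(-c)\<^sup>2 \<le> t\<^sup>2" using power_mono[OF ct, of 2] c0 by simp
      then have tc: "c\<^sup>2 \<le> t\<^sup>2" by simp
      have s1: "s\<^sup>2 \<le> 1"
      proof (rule ccontr)
        assume "\<not> s\<^sup>2 \<le> 1"
        then have "1 * (1 - c\<^sup>2) < s\<^sup>2 * (1 - c\<^sup>2)" using c2 by (intro mult_strict_right_mono) auto
        then show False using ss tc by simp
      qed
      have "c\<^sup>2 * s\<^sup>2 \<le> c\<^sup>2 * 1" using s1 by (intro mult_left_mono) auto
      then have "(-(c * s))\<^sup>2 \<le> t\<^sup>2" using tc by (simp add: power_mult_distrib)
      moreover have "t \<ge> 0" using False by simp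
      ultimately have "-(c * s) \<le> t" by (rule power2_le_imp_le)
      then show ?thesis by simp
    qed
  qed
  have xbxb: "xb \<bullet> xb = 1" unfolding xb_eq
    using aa ee ea rsq by (simp add: inner_diff_left inner_diff_right inner_add_left inner_add_right inner_commute power2_eq_square algebra_simps)
  have nxb: "norm xb = 1" using xbxb by (simp add: norm_eq_sqrt_inner)
  define phi where "phi = m * r - c * t"
  have lxb: "lam \<bullet> xb = phi" unfolding xb_eq lam_eq phi_def
    using aa ee ea by (simp add: inner_diff_left inner_diff_right inner_add_left inner_add_right inner_commute algebra_simps)
  have axb: "a \<bullet> xb = - t" unfolding xb_eq using aa ea by (simp add: inner_diff_right inner_add_right inner_commute)
  have exb: "e \<bullet> xb = r" unfolding xb_eq using ee ea by (simp add: inner_diff_right inner_add_right inner_commute)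
  have slam: "s *\<^sub>R lam = xb + (t + c * s) *\<^sub>R a" unfolding xb_def c_def t_def by simp
  have bound: "lam \<bullet> x \<le> phi" if "norm x \<le> 1" "a \<bullet> x + t \<le> 0" for x
  proof -
    have "s * (lam \<bullet> x) = xb \<bullet> x + (t + c * s) * (a \<bullet> x)"
      using arg_cong[OF slam, of "\<lambda>v. v \<bullet> x"] by (simp add: inner_add_left)
    also have "\<dots> \<le> 1 + (t + c * s) * (- t)"
    proof -
      have "xb \<bullet> x \<le> 1" using Cauchy_Schwarz_ineq2[of xb x] nxb that(1) by simp
      moreover have "(t + c * s) * (a \<bullet> x) \<le> (t + c * s) * (- t)"
        using ctr that(2) by (intro mult_left_mono) auto
      ultimately show ?thesis by linarith
    qed
    also have "\<dots> = s * phi" unfolding phi_def using sm[symmetric] rsq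
      by (simp add: algebra_simps power2_eq_square)
    finally show ?thesis using spos by simp
  qed
  have phiv: "phi_val lam a d beta = phi"
    unfolding phi_val_def t_def[symmetric]
  proof (rule cSup_eq_maximum)
    show "phi \<in> (\<bullet>) lam ` {x. norm x \<le> 1 \<and> a \<bullet> x + t \<le> 0}"
      using lxb nxb axb by (intro image_eqI[of _ _ xb]) auto
    show "y \<le> phi" if "y \<in> (\<bullet>) lam ` {x. norm x \<le> 1 \<and> a \<bullet> x + t \<le> 0}" for y
      using that bound by auto
  qed
  have decomp: "y = (a \<bullet> y) *\<^sub>R a + (e \<bullet> y) *\<^sub>R e" if "y \<in> span {lam, a}" for y
  proof -
    have "\<exists>u v. y - u *\<^sub>R lam = v *\<^sub>R a" using that by (auto simp: span_insert span_singleton)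
    then obtain u v where "y - u *\<^sub>R lam = v *\<^sub>R a" by blast
    then have y: "y = (u * c + v) *\<^sub>R a + (u * m) *\<^sub>R e"
      by (simp add: lam_eq algebra_simps)
    show ?thesis using aa ee ea by (subst (1) y) (simp add: y inner_add_right inner_commute)
  qed
  have part1: "(\<lambda>k. (lam \<bullet> (X k - xb)) / (a \<bullet> (X k - xb))) \<longlonglongrightarrow> (t + c * phi) / (phi + t * c)"
    if H: "\<forall>k. X k \<in> span {lam, a} \<and> norm (X k) = 1 \<and> a \<bullet> X k + t < 0" "X \<longlonglongrightarrow> xb"
    for X :: "nat \<Rightarrow> 'a"
  proof -
    define p where "p k = a \<bullet> X k" for k
    define q where "q k = e \<bullet> X k" for k
    have pq1: "(p k)\<^sup>2 + (q k)\<^sup>2 = 1" for k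
    proof -
      have X: "X k = p k *\<^sub>R a + q k *\<^sub>R e" using decomp H(1) by (simp add: p_def q_def)
      have "X k \<bullet> X k = 1" using H(1) by (simp add: dot_square_norm)
      then show ?thesis using aa ee ea unfolding X
        by (simp add: inner_diff_left inner_diff_right inner_add_left inner_add_right inner_commute power2_eq_square algebra_simps)
    qed
    have plim: "p \<longlonglongrightarrow> - t" unfolding p_def axb[symmetric] by (intro tendsto_intros H(2))
    have qlim: "q \<longlonglongrightarrow> r" unfolding q_def exb[symmetric] by (intro tendsto_intros H(2))
    have evq: "eventually (\<lambda>k. q k > 0) sequentially" using order_tendstoD(1)[OF qlim rpos] .
    have lim2: "(\<lambda>k. c + m * ((t - p k) / (q k + r))) \<longlonglongrightarrow> c + m * ((t - - t) / (r + r))"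
      using rpos by (intro tendsto_intros plim qlim) auto
    have eq: "c + m * ((t - - t) / (r + r)) = (t + c * phi) / (phi + t * c)"
      using rpos mpos msq unfolding phi_def by (simp add: field_simps power2_eq_square) algebra
    have ev: "eventually (\<lambda>k. c + m * ((t - p k) / (q k + r)) = (lam \<bullet> (X k - xb)) / (a \<bullet> (X k - xb))) sequentially"
      using evq
    proof eventually_elim
      case (elim k)
      have pt: "p k + t \<noteq> 0" using H(1) by (simp add: p_def) (smt (verit))
      have qr: "q k + r \<noteq> 0" using elim rpos by simp
      have num: "lam \<bullet> (X k - xb) = c * (p k + t) + m * (q k - r)"
        unfolding lam_eq using axb exb by (simp add: inner_add_left inner_diff_right p_def q_def algebra_simps)
      have den: "a \<bullet> (X k - xb) = p k + t" using axb by (simp add: inner_diff_right p_def)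
      have key: "(q k - r) * (q k + r) = (t - p k) * (t + p k)"
        using pq1[of k] rsq by (simp add: algebra_simps power2_eq_square)
      show ?case unfolding num den using pt qr key
        by (simp add: field_simps) algebra
    qed
    show ?thesis using Lim_transform_eventually[OF lim2 ev] eq by simp
  qed
  have P2: "\<exists>X :: nat \<Rightarrow> 'a. (\<forall>k. X k \<in> span {lam, a} \<and> norm (X k) = 1 \<and> a \<bullet> X k + t < 0) \<and> X \<longlonglongrightarrow> xb"
  proof -
    define eps where "eps k = (1 - t) / 2 * inverse (real (Suc k))" for k
    define pp where "pp k = - t - eps k" for k
    define Y where "Y k = pp k *\<^sub>R a + sqrt (1 - (pp k)\<^sup>2) *\<^sub>R e" for k
    have epos: "eps k > 0" for k using t1 by (simp add: eps_def)
    have ele: "eps k \<le> (1 - t) / 2" for k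
    proof -
      have "inverse (real (Suc k)) \<le> 1" by (simp add: inverse_le_1_iff)
      then show ?thesis unfolding eps_def using t1
        by (intro mult_left_le[where c="inverse (real (Suc k))"]) auto
    qed
    have pp1: "\<bar>pp k\<bar> \<le> 1" for k using epos[of k] ele[of k] t1 by (simp add: pp_def abs_le_iff)
    have pp2: "(pp k)\<^sup>2 \<le> 1" for k using pp1[of k] by (simp add: abs_square_le_1)
    have espan: "e \<in> span {lam, a}" unfolding e_def
      by (intro span_scale span_diff span_base) auto
    have aspan: "a \<in> span {lam, a}" by (intro span_base) auto
    have "Y k \<in> span {lam, a} \<and> norm (Y k) = 1 \<and> a \<bullet> Y k + t < 0" for k
    proof (intro conjI)
      show "Y k \<in> span {lam, a}" unfolding Y_def using espan aspan
        by (intro span_add span_scale) auto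
      have "Y k \<bullet> Y k = (pp k)\<^sup>2 + (sqrt (1 - (pp k)\<^sup>2))\<^sup>2" unfolding Y_def using aa ee ea
        by (simp add: inner_add_left inner_add_right inner_commute power2_eq_square)
      also have "\<dots> = 1" using pp2[of k] by simp
      finally show "norm (Y k) = 1" by (simp add: norm_eq_sqrt_inner)
      show "a \<bullet> Y k + t < 0" unfolding Y_def using aa ea epos[of k]
        by (simp add: inner_add_right inner_commute pp_def)
    qed
    moreover have "Y \<longlonglongrightarrow> xb"
    proof -
      have "eps \<longlonglongrightarrow> (1 - t) / 2 * 0" unfolding eps_def
        by (intro tendsto_mult tendsto_const LIMSEQ_inverse_real_of_nat)
      then have "pp \<longlonglongrightarrow> - t - 0" unfolding pp_def by (intro tendsto_intros) simp
      then have "Y \<longlonglongrightarrow> (- t) *\<^sub>R a + sqrt (1 - (- t)\<^sup>2) *\<^sub>R e" unfolding Y_def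
        by (intro tendsto_intros) simp_all
      then show ?thesis using xb_eq by (simp add: r_def)
    qed
    ultimately show ?thesis by blast
  qed
  show ?thesis unfolding c_def[symmetric] t_def[symmetric] phiv using part1 P2 by blast
qed

end
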